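(* Let $j\in S$ be a strategy that is removed by the iterated elimination of pure strategies strictly dominated by other pure strategies. Then along every solution $x(t)$ of the IBR dynamics with initial condition $x(0)$ in the interior of $\Delta$ (all coordinates positive), $x_j(t)\to 0$ as $t\to\infty$.
   Context: Let $n\ge 2$ and consider a symmetric two-player game with strategy set $S=\{1,\dots,n\}$ and payoff matrix $A=(\pi_{ij})_{i,j\in S}$, where $\pi_{ij}\in\mathbb{R}$ is the payoff of a player using strategy $i$ against an opponent using strategy $j$. The state space is the simplex $\Delta=\{x\in\mathbb{R}^n: x_i\ge 0,\ \sum_i x_i=1\}$, where $x_i$ is the population share using strategy $i$. The imitate-the-better-realization (IBR) dynamics is the ODE on $\Delta$ $$\dot x_i = x_i\sum_{j=1}^n\sum_{k=1}^n\sum_{m=1}^n x_jx_kx_m\big(\mathbf 1\{\pi_{jk}<\pi_{im}\}-\mathbf 1\{\pi_{jk}>\pi_{im}\}\big),\quad i\in S.$$ A strategy $j$ is strictly dominated by a pure strategy $i$ (in a game with strategy set $T\subseteq S$) if $\pi_{ik}>\pi_{jk}$ for all $k\in T$. Iterated elimination removes such a $j$, restricts the game to $T\setminus\{j\}$, and repeats. *)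

theory Defs
  imports "HOL-Analysis.Analysis"
begin

text \<open>Strategies are 0,...,n-1 (the paper's 1..n shifted). Payoffs: A i j = pi_ij.
  States are functions nat => real, only coordinates below n matter.\<close>

definition std_simplex :: "nat \<Rightarrow> (nat \<Rightarrow> real) set" where
  "std_simplex n = {x. (\<forall>i<n. 0 \<le> x i) \<and> (\<Sum>i<n. x i) = 1}"

definition ibr_field :: "nat \<Rightarrow> (nat \<Rightarrow> nat \<Rightarrow> real) \<Rightarrow> (nat \<Rightarrow> real) \<Rightarrow> nat \<Rightarrow> real" where
  "ibr_field n A x i =
     x i * (\<Sum>j<n. \<Sum>k<n. \<Sum>m<n. x j * x k * x m *
        ((if A j k < A i m then 1 else 0) - (if A j k > A i m then 1 else 0)))"

definition strictly_dominated :: "(nat \<Rightarrow> nat \<Rightarrow> real) \<Rightarrow> nat set \<Rightarrow> nat \<Rightarrow> bool" where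
  "strictly_dominated A T j \<longleftrightarrow> j \<in> T \<and> (\<exists>i\<in>T. \<forall>k\<in>T. A i k > A j k)"

inductive elim_reachable :: "nat \<Rightarrow> (nat \<Rightarrow> nat \<Rightarrow> real) \<Rightarrow> nat set \<Rightarrow> bool"
  for n A where
  start: "elim_reachable n A {..<n}"
| step: "elim_reachable n A T \<Longrightarrow> strictly_dominated A T j \<Longrightarrow> elim_reachable n A (T - {j})"

definition iteratively_eliminated :: "nat \<Rightarrow> (nat \<Rightarrow> nat \<Rightarrow> real) \<Rightarrow> nat \<Rightarrow> bool" where
  "iteratively_eliminated n A j \<longleftrightarrow> j < n \<and> (\<exists>T. elim_reachable n A T \<and> j \<notin> T)"

end

theory Submission
  imports Defs
begin

definition sg :: "real \<Rightarrow> real \<Rightarrow> real" where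
  "sg a b = (if a < b then 1 else 0) - (if a > b then 1 else 0)"

definition GG :: "nat \<Rightarrow> (nat \<Rightarrow> nat \<Rightarrow> real) \<Rightarrow> (nat \<Rightarrow> real) \<Rightarrow> nat \<Rightarrow> real" where
  "GG n A y i = (\<Sum>j<n. \<Sum>k<n. \<Sum>m<n. y j * y k * y m * sg (A j k) (A i m))"

lemma ibr_GG: "ibr_field n A y i = y i * GG n A y i"
  by (simp add: ibr_field_def GG_def sg_def)

lemma simplex_le1:
  assumes "y \<in> std_simplex n" "m < n" shows "y m \<le> 1" "0 \<le> y m"
proof -
  have nn: "\<forall>i<n. 0 \<le> y i" and s: "(\<Sum>i<n. y i) = 1" using assms(1) by (auto simp: std_simplex_def)
  have "y m \<le> (\<Sum>i<n. y i)" by (rule member_le_sum) (use assms(2) nn in auto)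
  then show "y m \<le> 1" using s by simp
  show "0 \<le> y m" using nn assms(2) by simp
qed

lemma triple_one:
  assumes "y \<in> std_simplex n"
  shows "(\<Sum>j<n. \<Sum>k<n. y j * y k) = 1"
proof -
  have s: "(\<Sum>i<n. y i) = 1" using assms by (auto simp: std_simplex_def)
  have "(\<Sum>j<n. \<Sum>k<n. y j * y k) = (\<Sum>j<n. y j * (\<Sum>k<n. y k))"
    by (simp add: sum_distrib_left)
  also have "\<dots> = 1" using s by simp
  finally show ?thesis .
qed

lemma triple_one3:
  assumes "y \<in> std_simplex n"
  shows "(\<Sum>j<n. \<Sum>k<n. \<Sum>m<n. y j * y k * y m) = 1"
proof -
  have s: "(\<Sum>i<n. y i) = 1" using assms by (auto simp: std_simplex_def)
  have "(\<Sum>j<n. \<Sum>k<n. \<Sum>m<n. y j * y k * y m) = (\<Sum>j<n. \<Sum>k<n. y j * y k * (\<Sum>m<n. y m))"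
    by (simp add: sum_distrib_left)
  also have "\<dots> = 1" using s triple_one[OF assms] by simp
  finally show ?thesis .
qed

lemma GG_ge:
  assumes "y \<in> std_simplex n"
  shows "GG n A y i \<ge> -1"
proof -
  have nn: "\<forall>i<n. 0 \<le> y i" using assms by (auto simp: std_simplex_def)
  have "(\<Sum>j<n. \<Sum>k<n. \<Sum>m<n. - (y j * y k * y m)) \<le> GG n A y i"
    unfolding GG_def
  proof (intro sum_mono)
    fix j k m assume "j \<in> {..<n}" "k \<in> {..<n}" "m \<in> {..<n}"
    then have "0 \<le> y j * y k * y m" using nn by simp
    then show "- (y j * y k * y m) \<le> y j * y k * y m * sg (A j k) (A i m)"
      unfolding sg_def by (auto simp: mult_le_cancel_left1)
  qed
  moreover have "(\<Sum>j<n. \<Sum>k<n. \<Sum>m<n. - (y j * y k * y m)) = -1"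
    using triple_one3[OF assms] by (simp add: sum_negf)
  ultimately show ?thesis by simp
qed

lemma sumsq_ge:
  assumes "y \<in> std_simplex n"
  shows "(\<Sum>m<n. (y m)^2) \<ge> 1 / real n"
proof -
  have s: "(\<Sum>i<n. y i) = 1" using assms by (auto simp: std_simplex_def)
  then have n0: "n > 0" by (cases n) auto
  have "0 \<le> (\<Sum>m<n. (y m - 1 / real n)^2)" by (simp add: sum_nonneg)
  also have "\<dots> = (\<Sum>m<n. (y m)^2 - 2 / real n * y m + 1 / (real n)^2)"
    by (intro sum.cong refl) (simp add: power2_diff power_divide)
  also have "\<dots> = (\<Sum>m<n. (y m)^2) - 2 / real n * (\<Sum>m<n. y m) + real n / (real n)^2"
    by (simp add: sum.distrib sum_subtractf sum_distrib_left)
  also have "\<dots> = (\<Sum>m<n. (y m)^2) - 1 / real n"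
    using s n0 by (simp add: power2_eq_square field_simps)
  finally show ?thesis by simp
qed


lemma sg_mono: "b \<le> b' \<Longrightarrow> sg a b \<le> sg a b'"
  by (auto simp: sg_def)

lemma sg_bounds: "-1 \<le> sg a b" "sg a b \<le> 1" "sg a a = 0"
  by (auto simp: sg_def)

lemma key_ineq:
  assumes y: "y \<in> std_simplex n" and "i < n" "j < n" and T: "T \<subseteq> {..<n}" "i \<in> T"
    and dom: "\<forall>k\<in>T. A j k < A i k"
  shows "GG n A y i - GG n A y j \<ge> y i / real n - 3 * (\<Sum>m<n. if m \<in> T then 0 else y m)"
proof -
  have nn: "\<And>m. m < n \<Longrightarrow> 0 \<le> y m" and le1: "\<And>m. m < n \<Longrightarrow> y m \<le> 1"
    using simplex_le1[OF y] by auto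
  define d where "d J K m = sg (A J K) (A i m) - sg (A J K) (A j m)" for J K m
  define S where "S m = (\<Sum>J<n. \<Sum>K<n. y J * y K * d J K m)" for m
  have "GG n A y i - GG n A y j = (\<Sum>J<n. \<Sum>K<n. \<Sum>m<n. y J * y K * y m * d J K m)"
    unfolding GG_def d_def by (simp add: sum_subtractf algebra_simps)
  also have "\<dots> = (\<Sum>J<n. \<Sum>m<n. \<Sum>K<n. y m * (y J * y K * d J K m))"
    apply (rule sum.cong[OF refl])
    apply (subst sum.swap)
    apply (simp add: algebra_simps)
    done
  also have "\<dots> = (\<Sum>m<n. \<Sum>J<n. \<Sum>K<n. y m * (y J * y K * d J K m))"
    by (rule sum.swap)
  also have "\<dots> = (\<Sum>m<n. y m * S m)"
    unfolding S_def by (simp add: sum_distrib_left)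
  finally have eq: "GG n A y i - GG n A y j = (\<Sum>m<n. y m * S m)" .
  have bnd: "y m * S m \<ge> y i * (y m)^2 - 3 * (if m \<in> T then 0 else y m)" if m: "m < n" for m
  proof (cases "m \<in> T")
    case True
    then have lt: "A j m < A i m" using dom by auto
    have dnn: "0 \<le> d J K m" for J K using sg_mono[of "A j m" "A i m" "A J K"] lt unfolding d_def by simp
    have dii: "d i m m = 1" unfolding d_def using lt by (simp add: sg_def)
    have fnn: "0 \<le> (\<Sum>K<n. y J * y K * d J K m)" if "J < n" for J
      using nn dnn that by (intro sum_nonneg) simp
    have "y i * y m \<le> (\<Sum>K<n. y i * y K * d i K m)"
      using member_le_sum[of m "{..<n}" "\<lambda>K. y i * y K * d i K m"] m nn dnn \<open>i<n\<close> dii by simp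
    also have "\<dots> \<le> S m"
      unfolding S_def using member_le_sum[of i "{..<n}" "\<lambda>J. \<Sum>K<n. y J * y K * d J K m"] fnn \<open>i<n\<close> by simp
    finally have "y i * y m \<le> S m" .
    then have "y m * (y i * y m) \<le> y m * S m" using nn m by (simp add: mult_left_mono)
    then show ?thesis using True by (simp add: power2_eq_square algebra_simps)
  next
    case False
    have "d J K m \<ge> -2" for J K unfolding d_def using sg_bounds[of "A J K"] by smt
    then have "(\<Sum>J<n. \<Sum>K<n. y J * y K * (-2)) \<le> S m"
      unfolding S_def using nn by (intro sum_mono) (metis lessThan_iff mult_left_mono zero_le_mult_iff)
    moreover have "(\<Sum>J<n. \<Sum>K<n. y J * y K * (-2)) = -2"
    proof -
      have "(\<Sum>J<n. \<Sum>K<n. y J * y K * (-2)) = (\<Sum>J<n. \<Sum>K<n. y J * y K) * (-2)"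
        by (simp add: sum_distrib_right sum_negf)
      then show ?thesis using triple_one[OF y] by simp
    qed
    ultimately have "-2 \<le> S m" by simp
    then have "y m * (-2) \<le> y m * S m" using nn m by (metis mult_left_mono)
    moreover have "y i * (y m)^2 \<le> y m"
    proof -
      have "y i * (y m)^2 \<le> 1 * (y m * 1)" unfolding power2_eq_square
        using nn le1 m \<open>i<n\<close> by (intro mult_mono) (auto intro: mult_left_mono)
      then show ?thesis by simp
    qed
    ultimately show ?thesis using False by simp
  qed
  have "(\<Sum>m<n. y i * (y m)^2 - 3 * (if m \<in> T then 0 else y m)) \<le> (\<Sum>m<n. y m * S m)"
    using bnd by (intro sum_mono) simp
  moreover have "(\<Sum>m<n. y i * (y m)^2 - 3 * (if m \<in> T then 0 else y m))
      = y i * (\<Sum>m<n. (y m)^2) - 3 * (\<Sum>m<n. if m \<in> T then 0 else y m)"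
    by (simp add: sum_subtractf sum_distrib_left)
  moreover have "y i * (1 / real n) \<le> y i * (\<Sum>m<n. (y m)^2)"
    using sumsq_ge[OF y] nn \<open>i<n\<close> by (intro mult_left_mono) auto
  ultimately show ?thesis using eq by simp
qed


theorem proposition2:
  fixes n :: nat and A :: "nat \<Rightarrow> nat \<Rightarrow> real" and x :: "real \<Rightarrow> nat \<Rightarrow> real" and j :: nat
  assumes "n \<ge> 2"
    and "iteratively_eliminated n A j"
    and "\<forall>t\<ge>0. x t \<in> std_simplex n"
    and "\<forall>t\<ge>0. \<forall>i<n. ((\<lambda>s. x s i) has_real_derivative ibr_field n A (x t) i) (at t within {0..})"
    and "\<forall>i<n. x 0 i > 0"
  shows "((\<lambda>t. x t j) \<longlongrightarrow> 0) at_top"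
proof -
  note xs = assms(3) and der0 = assms(4)
  have der: "((\<lambda>s. x s i) has_real_derivative x t i * GG n A (x t) i) (at t)" if "t > 0" "i < n" for t i
  proof -
    have "at t within {0..} = at t" using that by (intro at_within_interior) simp
    moreover have "((\<lambda>s. x s i) has_real_derivative x t i * GG n A (x t) i) (at t within {0..})"
      using der0 that by (simp add: ibr_GG)
    ultimately show ?thesis by simp
  qed
  have cont: "continuous_on {0..} (\<lambda>s. x s i)" if "i < n" for i
    unfolding continuous_on_eq_continuous_within
  proof
    fix s :: real assume "s \<in> {0..}"
    then show "continuous (at s within {0..}) (\<lambda>s. x s i)"
      using der0 that by (intro DERIV_continuous) auto
  qed
  have nonneg: "0 \<le> x t i" if "t \<ge> 0" "i < n" for t i
    using simplex_le1(2)[OF xs[rule_format, OF that(1)] that(2)] .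
  have mono: "x a i * exp a \<le> x b i * exp b" if "0 \<le> a" "a \<le> b" "i < n" for a b i
  proof (rule DERIV_nonneg_imp_increasing_open[OF that(2)])
    fix y assume y: "a < y" "y < b"
    then have "y > 0" using that by simp
    have d: "((\<lambda>s. x s i * exp s) has_real_derivative x y i * GG n A (x y) i * exp y + exp y * x y i) (at y)"
      using DERIV_mult[OF der[OF \<open>y>0\<close> \<open>i<n\<close>] DERIV_exp] .
    have "0 \<le> x y i * exp y * (GG n A (x y) i + 1)"
      using nonneg[of y i] \<open>y>0\<close> \<open>i<n\<close> GG_ge[OF xs[rule_format, of y], of A i] by simp
    then show "\<exists>z. ((\<lambda>s. x s i * exp s) has_real_derivative z) (at y) \<and> 0 \<le> z"
      using d by (intro exI[of _ "x y i * GG n A (x y) i * exp y + exp y * x y i"]) (simp add: algebra_simps)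
  next
    show "continuous_on {a..b} (\<lambda>s. x s i * exp s)"
      using cont[OF that(3)] that by (intro continuous_intros) (auto intro: continuous_on_subset)
  qed
  have pos: "x t i > 0" if "t \<ge> 0" "i < n" for t i
  proof -
    have "x 0 i * exp 0 \<le> x t i * exp t" using mono[of 0 t i] that by simp
    moreover have "0 < x 0 i" using assms(5) that by simp
    ultimately have "0 < x t i * exp t" by simp
    then show ?thesis by (simp add: zero_less_mult_iff)
  qed
  define eps where "eps T t = (\<Sum>m<n. if m \<in> T then 0 else x t m)" for T t
  have inv: "T \<subseteq> {..<n} \<and> (\<exists>E D B. \<forall>t>0. (E has_real_derivative D t) (at t) \<and> eps T t \<le> D t \<and> E t \<le> B)"
    if "elim_reachable n A T" for T
    using that
  proof (induction rule: elim_reachable.induct)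
    case start
    have "eps {..<n} t = 0" for t unfolding eps_def by simp
    then show ?case by (intro conjI exI[of _ "\<lambda>t. 0"] exI[of _ "0::real"]) auto
  next
    case (step T j)
    from step.IH obtain E D B where EDB: "\<And>t. t > 0 \<Longrightarrow> (E has_real_derivative D t) (at t)"
      "\<And>t. t > 0 \<Longrightarrow> eps T t \<le> D t" "\<And>t. t > 0 \<Longrightarrow> E t \<le> B" and Tsub: "T \<subseteq> {..<n}" by blast
    from step.hyps(2) obtain i where ij: "j \<in> T" "i \<in> T" "\<forall>k\<in>T. A j k < A i k"
      unfolding strictly_dominated_def by blast
    have "i < n" "j < n" using ij Tsub by auto
    define C where "C = exp (3 * B)"
    define w where "w t = x t j / x t i * exp (- 3 * E t)" for t
    define Wd where "Wd t = w t * (GG n A (x t) j - GG n A (x t) i - 3 * D t)" for t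
    have wder: "(w has_real_derivative Wd t) (at t)" if "t > 0" for t
    proof -
      have xi: "x t i > 0" using pos that \<open>i<n\<close> by simp
      note d1 = DERIV_divide[OF der[OF that \<open>j<n\<close>] der[OF that \<open>i<n\<close>]]
      note d2 = DERIV_fun_exp[OF DERIV_cmult[OF EDB(1)[OF that], of "-3"]]
      note d3 = DERIV_mult[OF d1[OF xi[THEN less_imp_neq, symmetric]] d2]
      show ?thesis unfolding w_def[abs_def]
        apply (rule DERIV_cong[OF d3])
        using xi unfolding Wd_def w_def by (simp add: field_simps)
    qed
    define Psi where "Psi t = - (real n * C) * w t" for t
    define Psid where "Psid t = - (real n * C) * Wd t" for t
    have n0: "real n > 0" using \<open>i<n\<close> by simp
    have epsj: "eps (T - {j}) t = eps T t + x t j" for t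
    proof -
      have "eps (T - {j}) t = (\<Sum>m<n. (if m \<in> T then 0 else x t m) + (if m = j then x t m else 0))"
        unfolding eps_def using ij(1) by (intro sum.cong refl) auto
      also have "\<dots> = eps T t + x t j" unfolding eps_def using \<open>j<n\<close>
        by (simp add: sum.distrib)
      finally show ?thesis .
    qed
    have Psid_ge: "x t j \<le> Psid t" if t: "t > 0" for t
    proof -
      have xi: "x t i > 0" and xj: "x t j > 0" using pos t \<open>i<n\<close> \<open>j<n\<close> by auto
      have K: "GG n A (x t) i - GG n A (x t) j \<ge> x t i / real n - 3 * eps T t"
        unfolding eps_def using key_ineq[OF xs[rule_format, of t] \<open>i<n\<close> \<open>j<n\<close> Tsub ij(2)] ij(3) t by simp
      have w0: "w t \<ge> 0" unfolding w_def using xi xj by simp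
      have "GG n A (x t) j - GG n A (x t) i - 3 * D t \<le> - (x t i / real n)"
        using K EDB(2)[OF t] by simp
      then have "Wd t \<le> w t * (- (x t i / real n))"
        unfolding Wd_def using w0 by (rule mult_left_mono)
      then have "w t * (x t i / real n) \<le> - Wd t" by simp
      then have "real n * C * (w t * (x t i / real n)) \<le> real n * C * (- Wd t)"
        by (rule mult_left_mono) (simp add: C_def)
      then have "real n * C * (w t * (x t i / real n)) \<le> Psid t"
        unfolding Psid_def by simp
      moreover have "real n * C * (w t * (x t i / real n)) = exp (3 * B - 3 * E t) * x t j"
        unfolding w_def C_def using xi n0 by (simp add: field_simps exp_diff exp_minus)
      moreover have "exp (3 * B - 3 * E t) \<ge> 1" using EDB(3)[OF t] by simp
      ultimately show ?thesis using xj
        by (smt (verit) mult_right_mono mult_cancel_right1)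
    qed
    have "\<forall>t>0. ((\<lambda>t. E t + Psi t) has_real_derivative (D t + Psid t)) (at t)
            \<and> eps (T - {j}) t \<le> D t + Psid t \<and> E t + Psi t \<le> B"
    proof (intro allI impI conjI)
      fix t :: real assume t: "t > 0"
      show "((\<lambda>t. E t + Psi t) has_real_derivative (D t + Psid t)) (at t)"
        unfolding Psi_def[abs_def] Psid_def using DERIV_add[OF EDB(1)[OF t] DERIV_cmult[OF wder[OF t], of "- (real n * C)"]] by simp
      show "eps (T - {j}) t \<le> D t + Psid t" using epsj EDB(2)[OF t] Psid_ge[OF t] by simp
      have "w t \<ge> 0" unfolding w_def using pos[of t i] pos[of t j] t \<open>i<n\<close> \<open>j<n\<close> by simp
      then have "Psi t \<le> 0" unfolding Psi_def C_def by simp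
      then show "E t + Psi t \<le> B" using EDB(3)[OF t] by simp
    qed
    then have "\<exists>E D B. \<forall>t>0. (E has_real_derivative D t) (at t) \<and> eps (T - {j}) t \<le> D t \<and> E t \<le> B"
      by (intro exI[of _ "\<lambda>t. E t + Psi t"] exI[of _ "\<lambda>t. D t + Psid t"] exI[of _ B])
    then show ?case using Tsub by blast
  qed
  obtain T where reach: "elim_reachable n A T" and jT: "j \<notin> T" and jn: "j < n"
    using assms(2) unfolding iteratively_eliminated_def by blast
  obtain E D B where EDB: "\<And>t. t > 0 \<Longrightarrow> (E has_real_derivative D t) (at t)"
      "\<And>t. t > 0 \<Longrightarrow> eps T t \<le> D t" "\<And>t. t > 0 \<Longrightarrow> E t \<le> B"
    using inv[OF reach] by blast
  have Dge: "x t j \<le> D t" if t: "t > 0" for t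
  proof -
    have "x t j \<le> eps T t" unfolding eps_def
      using member_le_sum[of j "{..<n}" "\<lambda>m. if m \<in> T then 0 else x t m"] jT jn nonneg[of t] t by simp
    then show ?thesis using EDB(2)[OF t] by simp
  qed
  have Emono: "E a \<le> E b" if "0 < a" "a \<le> b" for a b
  proof (rule DERIV_nonneg_imp_increasing_open[OF that(2)])
    fix y assume "a < y" "y < b"
    then have y: "y > 0" using that by simp
    show "\<exists>z. (E has_real_derivative z) (at y) \<and> 0 \<le> z"
      using EDB(1)[OF y] Dge[OF y] nonneg[of y j] y jn by (intro exI[of _ "D y"]) simp
  next
    show "continuous_on {a..b} E"
      using that by (intro continuous_at_imp_continuous_on ballI DERIV_isCont[OF EDB(1)]) auto
  qed
  have bound: "x t j \<le> exp 1 * (E (t + 1) - E t)" if t: "t > 0" for t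
  proof -
    obtain z where z: "t < z" "z < t + 1" "E (t + 1) - E t = (t + 1 - t) * D z"
      using MVT2[of t "t + 1" E D] EDB(1) t by force
    have "x t j * exp t \<le> x z j * exp z" using mono[of t z j] t z jn by simp
    then have "x t j * exp t / exp z \<le> x z j" by (simp add: divide_le_eq)
    moreover have "x t j * exp (-1) \<le> x t j * exp t / exp z"
    proof -
      have "exp (-1) \<le> exp (t - z)" using z by simp
      then have "x t j * exp (-1) \<le> x t j * exp (t - z)"
        using nonneg[of t j] t jn by (intro mult_left_mono) auto
      then show ?thesis by (simp add: exp_diff)
    qed
    ultimately have "x t j * exp (-1) \<le> D z" using Dge[of z] z t by simp
    then have "x t j * exp (-1) \<le> E (t + 1) - E t" using z by simp
    then have "exp 1 * (x t j * exp (-1)) \<le> exp 1 * (E (t + 1) - E t)"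
      by (rule mult_left_mono) simp
    moreover have "exp 1 * (x t j * exp (-1)) = x t j" by (simp add: exp_minus)
    ultimately show ?thesis by simp
  qed
  define L where "L = Sup (E ` {0<..})"
  have bdd: "bdd_above (E ` {0<..})" using EDB(3) by (intro bdd_aboveI[of _ B]) auto
  have EL: "E t \<le> L" if "t > 0" for t
    unfolding L_def using bdd that by (intro cSup_upper) auto
  show ?thesis
    unfolding tendsto_iff eventually_at_top_linorder
  proof (intro allI impI)
    fix e :: real assume e: "e > 0"
    have "L - e / exp 1 < L" using e by simp
    then obtain t0 where t0: "t0 > 0" "L - e / exp 1 < E t0"
      using less_cSupD[of "E ` {0<..}" "L - e / exp 1"] unfolding L_def by auto
    show "\<exists>N. \<forall>t\<ge>N. dist (x t j) 0 < e"
    proof (intro exI[of _ t0] allI impI)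
      fix t assume "t0 \<le> t"
      then have t: "t > 0" using t0 by simp
      have "E (t + 1) - E t \<le> L - E t0" using EL[of "t + 1"] Emono[OF t0(1) \<open>t0 \<le> t\<close>] t by simp
      also have "\<dots> < e / exp 1" using t0 by simp
      finally have "exp 1 * (E (t + 1) - E t) < e" by (simp add: field_simps)
      then have "x t j < e" using bound[OF t] by simp
      moreover have "0 \<le> x t j" using nonneg[of t j] t jn by simp
      ultimately show "dist (x t j) 0 < e" by simp
    qed
  qed
qed

end
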